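(* Let $\tau,K\ge1$ and $C\ge1$. Let $\lambda_i,\lambda_j,\lambda_k,\lambda_\ell\in\mathbb{H}$ with $\lambda_i\neq\lambda_j$, $\lambda_k\neq\lambda_\ell$ and $\{\lambda_i,\lambda_j\}\neq\{\lambda_k,\lambda_\ell\}$, and let $A_i,A_j,A_k,A_\ell\subset\mathbb{H}$ be finite sets such that each $X\in\{A_i,A_j,A_k,A_\ell\}$ satisfies $|X|\le C\tau$ and $E^+(X)\le C\tau^3/K$. Then \[ \big|\big((A_i+A_j)\times(A_i\lambda_i+A_j\lambda_j)\big)\cap\big((A_k+A_\ell)\times(A_k\lambda_k+A_\ell\lambda_\ell)\big)\big| \ll C\,\tau^2K^{-1/2}, \] where $(X+Y)\times(X\lambda+Y\mu)$ denotes the set of points $\{(a+b,\ a\lambda+b\mu): a\in X, b\in Y\}\subset\mathbb{H}^2$.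
   Context: $\mathbb{H}$ denotes the quaternions. For finite $X\subset\mathbb{H}$, $E^+(X)=|\{(a,b,c,d)\in X^4: a-b=c-d\}|$ is the additive energy. $X\lambda=\{x\lambda:x\in X\}$. $\ll$ hides an absolute constant. *)

theory Defs
  imports Complex_Main
begin

datatype quat = Quat (Re: real) (Im1: real) (Im2: real) (Im3: real)

lemma quat_eqI [intro?]:
  "\<lbrakk>Re x = Re y; Im1 x = Im1 y; Im2 x = Im2 y; Im3 x = Im3 y\<rbrakk> \<Longrightarrow> x = y"
  by (cases x, cases y) simp

instantiation quat :: ring_1
begin

definition "0 = Quat 0 0 0 0"
definition "1 = Quat 1 0 0 0"
definition "x + y = Quat (Re x + Re y) (Im1 x + Im1 y) (Im2 x + Im2 y) (Im3 x + Im3 y)"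
definition "- x = Quat (- Re x) (- Im1 x) (- Im2 x) (- Im3 x)"
definition "x - y = Quat (Re x - Re y) (Im1 x - Im1 y) (Im2 x - Im2 y) (Im3 x - Im3 y)"
definition "x * y = Quat
   (Re x * Re y - Im1 x * Im1 y - Im2 x * Im2 y - Im3 x * Im3 y)
   (Re x * Im1 y + Im1 x * Re y + Im2 x * Im3 y - Im3 x * Im2 y)
   (Re x * Im2 y - Im1 x * Im3 y + Im2 x * Re y + Im3 x * Im1 y)
   (Re x * Im3 y + Im1 x * Im2 y - Im2 x * Im1 y + Im3 x * Re y)"

instance
  by standard
     (auto intro!: quat_eqI simp: zero_quat_def one_quat_def plus_quat_def
        uminus_quat_def minus_quat_def times_quat_def algebra_simps)

end

definition additive_energy :: "quat set \<Rightarrow> nat" where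
  "additive_energy X =
     card {(a, b, c, d). a \<in> X \<and> b \<in> X \<and> c \<in> X \<and> d \<in> X \<and> a - b = c - d}"

definition twisted_sumset :: "quat set \<Rightarrow> quat set \<Rightarrow> quat \<Rightarrow> quat \<Rightarrow> (quat \<times> quat) set" where
  "twisted_sumset X Y l m = {(a + b, a * l + b * m) | a b. a \<in> X \<and> b \<in> Y}"

end

theory Submission imports Defs begin

definition ind :: "bool \<Rightarrow> real" where "ind P = (if P then 1 else 0)"

lemma card_filter_sum: "finite A \<Longrightarrow> real (card {x\<in>A. P x}) = (\<Sum>x\<in>A. ind (P x))"
proof -
  assume fA: "finite A"
  have "(\<Sum>x\<in>A. ind (P x)) = (\<Sum>x\<in>{x\<in>A. P x}. 1)" by (simp only: sum.inter_filter[OF fA] ind_def)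
  moreover have "(\<Sum>x\<in>{x\<in>A. P x}. 1) = real (card {x\<in>A. P x})" by simp
  ultimately show ?thesis by simp
qed

lemma energy_sum:
  assumes "finite X"
  shows "real (additive_energy X) = (\<Sum>a\<in>X. \<Sum>b\<in>X. \<Sum>c\<in>X. \<Sum>d\<in>X. ind (a - b = c - d))"
proof -
  have "{(a, b, c, d). a \<in> X \<and> b \<in> X \<and> c \<in> X \<and> d \<in> X \<and> a - b = c - d}
      = {p \<in> X \<times> X \<times> X \<times> X. case p of (a,b,c,d) \<Rightarrow> a - b = c - d}" by auto
  then have "real (additive_energy X) = (\<Sum>p\<in>X \<times> X \<times> X \<times> X. ind (case p of (a,b,c,d) \<Rightarrow> a - b = c - d))"
    unfolding additive_energy_def using assms by (simp add: card_filter_sum)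
  also have "\<dots> = (\<Sum>a\<in>X. \<Sum>b\<in>X. \<Sum>c\<in>X. \<Sum>d\<in>X. ind (a - b = c - d))"
    by (simp add: sum.cartesian_product split_def)
  finally show ?thesis .
qed

lemma ind_delta: "(\<Sum>d\<in>D. ind (u = d) * ind (v = d)) = ind (u = v \<and> u \<in> D)" if "finite D"
proof -
  have "(\<Sum>d\<in>D. ind (u = d) * ind (v = d)) = (\<Sum>d\<in>D. if u = d then ind (v = d) else 0)"
    by (rule sum.cong) (auto simp: ind_def)
  also have "\<dots> = ind (u = v \<and> u \<in> D)" using that by (simp add: ind_def)
  finally show ?thesis .
qed

lemma keyK:
  fixes X Z D :: "quat set"
  assumes "finite X" "finite Z" "finite D"
  shows "(\<Sum>d\<in>D. (\<Sum>a\<in>X. \<Sum>b\<in>X. ind (a - b = d)) * (\<Sum>c\<in>Z. \<Sum>e\<in>Z. ind (c - e = d)))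
       = (\<Sum>a\<in>X. \<Sum>b\<in>X. \<Sum>c\<in>Z. \<Sum>e\<in>Z. ind (a - b = c - e \<and> a - b \<in> D))"
proof -
  have "(\<Sum>d\<in>D. (\<Sum>a\<in>X. \<Sum>b\<in>X. ind (a - b = d)) * (\<Sum>c\<in>Z. \<Sum>e\<in>Z. ind (c - e = d)))
     = (\<Sum>d\<in>D. \<Sum>a\<in>X. \<Sum>b\<in>X. \<Sum>c\<in>Z. \<Sum>e\<in>Z. ind (a - b = d) * ind (c - e = d))"
    by (simp only: sum_distrib_right, simp only: sum_distrib_left)
  also have "\<dots> = (\<Sum>a\<in>X. \<Sum>b\<in>X. \<Sum>c\<in>Z. \<Sum>e\<in>Z. \<Sum>d\<in>D. ind (a - b = d) * ind (c - e = d))"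
    by (simp only: sum.swap[where A=D])
  also have "\<dots> = (\<Sum>a\<in>X. \<Sum>b\<in>X. \<Sum>c\<in>Z. \<Sum>e\<in>Z. ind (a - b = c - e \<and> a - b \<in> D))"
    using assms(3) by (simp add: ind_delta)
  finally show ?thesis .
qed


lemma avg_le: "(w::real) \<le> (a + b) / 2 \<Longrightarrow> a \<le> M \<Longrightarrow> b \<le> M \<Longrightarrow> w \<le> M" by (simp add: field_simps)

lemma W_bound:
  fixes X Z :: "quat set"
  assumes fX: "finite X" and fZ: "finite Z"
    and EX: "real (additive_energy X) \<le> M" and EZ: "real (additive_energy Z) \<le> M"
  shows "(\<Sum>a\<in>X. \<Sum>b\<in>X. \<Sum>c\<in>Z. \<Sum>e\<in>Z. ind (a - b = c - e)) \<le> M"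
proof -
  define D where "D = (\<lambda>(a,b). a - b) ` (X \<times> X)"
  have fD: "finite D" unfolding D_def using fX by auto
  define rX where "rX d = (\<Sum>a\<in>X. \<Sum>b\<in>X. ind (a - b = d))" for d
  define rZ where "rZ d = (\<Sum>c\<in>Z. \<Sum>e\<in>Z. ind (c - e = d))" for d
  have inD: "a - b \<in> D" if "a \<in> X" "b \<in> X" for a b unfolding D_def using that by auto
  have "(\<Sum>a\<in>X. \<Sum>b\<in>X. \<Sum>c\<in>Z. \<Sum>e\<in>Z. ind (a - b = c - e))
      = (\<Sum>a\<in>X. \<Sum>b\<in>X. \<Sum>c\<in>Z. \<Sum>e\<in>Z. ind (a - b = c - e \<and> a - b \<in> D))"
    by (intro sum.cong refl) (simp add: inD)
  also have "\<dots> = (\<Sum>d\<in>D. rX d * rZ d)"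
    unfolding rX_def rZ_def using keyK[OF fX fZ fD] by simp
  also have "\<dots> \<le> (\<Sum>d\<in>D. (rX d * rX d + rZ d * rZ d) / 2)"
  proof (rule sum_mono)
    fix d show "rX d * rZ d \<le> (rX d * rX d + rZ d * rZ d) / 2"
      using sum_squares_ge_zero[of "rX d - rZ d" 0] by (simp add: algebra_simps power2_eq_square)
  qed
  also have "\<dots> = ((\<Sum>d\<in>D. rX d * rX d) + (\<Sum>d\<in>D. rZ d * rZ d)) / 2"
    by (simp only: sum_divide_distrib[symmetric] sum.distrib)
  finally have h1: "(\<Sum>a\<in>X. \<Sum>b\<in>X. \<Sum>c\<in>Z. \<Sum>e\<in>Z. ind (a - b = c - e)) \<le> ((\<Sum>d\<in>D. rX d * rX d) + (\<Sum>d\<in>D. rZ d * rZ d)) / 2" .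
  have h2: "(\<Sum>d\<in>D. rX d * rX d) = real (additive_energy X)"
  proof -
    have "(\<Sum>d\<in>D. rX d * rX d) = (\<Sum>a\<in>X. \<Sum>b\<in>X. \<Sum>c\<in>X. \<Sum>e\<in>X. ind (a - b = c - e \<and> a - b \<in> D))"
      unfolding rX_def using keyK[OF fX fX fD] by simp
    also have "\<dots> = (\<Sum>a\<in>X. \<Sum>b\<in>X. \<Sum>c\<in>X. \<Sum>e\<in>X. ind (a - b = c - e))"
      by (intro sum.cong refl) (simp add: inD)
    finally show ?thesis using energy_sum[OF fX] by simp
  qed
  have h3: "(\<Sum>d\<in>D. rZ d * rZ d) \<le> real (additive_energy Z)"
  proof -
    have "(\<Sum>d\<in>D. rZ d * rZ d) = (\<Sum>a\<in>Z. \<Sum>b\<in>Z. \<Sum>c\<in>Z. \<Sum>e\<in>Z. ind (a - b = c - e \<and> a - b \<in> D))"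
      unfolding rZ_def using keyK[OF fZ fZ fD] by simp
    also have "\<dots> \<le> (\<Sum>a\<in>Z. \<Sum>b\<in>Z. \<Sum>c\<in>Z. \<Sum>e\<in>Z. ind (a - b = c - e))"
      by (intro sum_mono) (simp add: ind_def)
    finally show ?thesis using energy_sum[OF fZ] by simp
  qed
  show ?thesis by (rule avg_le[OF h1]) (use h2 h3 EX EZ in auto)
qed

lemma inner_bound:
  fixes X Y Z :: "quat set"
  assumes fY: "finite Y" and fZ: "finite Z"
  shows "(\<Sum>y\<in>Y. ind (x + y \<in> Z) * ind (x' + y \<in> Z)) \<le> (\<Sum>c\<in>Z. \<Sum>e\<in>Z. ind (x - x' = c - e))"
proof -
  have "(\<Sum>y\<in>Y. ind (x + y \<in> Z) * ind (x' + y \<in> Z)) = (\<Sum>y\<in>Y. ind (x + y \<in> Z \<and> x' + y \<in> Z))"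
    by (intro sum.cong refl) (simp add: ind_def)
  also have "\<dots> = real (card {y\<in>Y. x + y \<in> Z \<and> x' + y \<in> Z})"
    using card_filter_sum[OF fY] by simp
  also have "\<dots> \<le> real (card {c\<in>Z. c - x + x' \<in> Z})"
  proof -
    have "card {y\<in>Y. x + y \<in> Z \<and> x' + y \<in> Z} \<le> card {c\<in>Z. c - x + x' \<in> Z}"
      by (rule card_inj_on_le[where f="\<lambda>y. x + y"]) (auto simp: inj_on_def fZ algebra_simps)
    then show ?thesis by simp
  qed
  also have "\<dots> = (\<Sum>c\<in>Z. ind (c - x + x' \<in> Z))"
    using card_filter_sum[OF fZ] by simp
  also have "\<dots> = (\<Sum>c\<in>Z. \<Sum>e\<in>Z. ind (x - x' = c - e))"
  proof (rule sum.cong[OF refl])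
    fix c
    have "(\<Sum>e\<in>Z. ind (x - x' = c - e)) = (\<Sum>e\<in>Z. if e = c - x + x' then 1 else 0)"
      by (intro sum.cong refl) (auto simp: ind_def algebra_simps)
    also have "\<dots> = ind (c - x + x' \<in> Z)" using fZ by (simp add: ind_def)
    finally show "ind (c - x + x' \<in> Z) = (\<Sum>e\<in>Z. ind (x - x' = c - e))" by simp
  qed
  finally show ?thesis .
qed

lemma G_bound:
  fixes X Y Z :: "quat set"
  assumes fX: "finite X" and fY: "finite Y" and fZ: "finite Z"
    and EX: "real (additive_energy X) \<le> M" and EZ: "real (additive_energy Z) \<le> M"
    and cY: "real (card Y) \<le> L" and t: "t > 0"
  shows "real (card {p \<in> X \<times> Y. fst p + snd p \<in> Z}) \<le> (M / t + t * L) / 2"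
proof -
  define u where "u y = (\<Sum>x\<in>X. ind (x + y \<in> Z))" for y
  have "real (card {p \<in> X \<times> Y. fst p + snd p \<in> Z}) = (\<Sum>p\<in>X \<times> Y. ind (fst p + snd p \<in> Z))"
    by (rule card_filter_sum) (use fX fY in simp)
  also have "\<dots> = (\<Sum>x\<in>X. \<Sum>y\<in>Y. ind (x + y \<in> Z))"
    by (subst sum.cartesian_product) (simp add: case_prod_beta)
  also have "\<dots> = (\<Sum>y\<in>Y. u y)" unfolding u_def by (rule sum.swap)
  also have "\<dots> \<le> (\<Sum>y\<in>Y. (u y * u y / t + t) / 2)"
  proof (rule sum_mono)
    fix y
    have "0 \<le> (u y - t) * (u y - t)" by simp
    then have "2 * t * u y \<le> u y * u y + t * t" by (simp add: algebra_simps)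
    then show "u y \<le> (u y * u y / t + t) / 2" using t
      by (simp add: field_simps)
  qed
  also have "\<dots> = ((\<Sum>y\<in>Y. u y * u y) / t + t * real (card Y)) / 2"
    by (simp only: sum_divide_distrib[symmetric] sum.distrib sum_constant) simp
  finally have g1: "real (card {p \<in> X \<times> Y. fst p + snd p \<in> Z}) \<le> ((\<Sum>y\<in>Y. u y * u y) / t + t * real (card Y)) / 2" .
  have g2: "(\<Sum>y\<in>Y. u y * u y) \<le> M"
  proof -
    have "(\<Sum>y\<in>Y. u y * u y) = (\<Sum>y\<in>Y. \<Sum>x\<in>X. \<Sum>x'\<in>X. ind (x + y \<in> Z) * ind (x' + y \<in> Z))"
      unfolding u_def by (simp only: sum_product)
    also have "\<dots> = (\<Sum>x\<in>X. \<Sum>x'\<in>X. \<Sum>y\<in>Y. ind (x + y \<in> Z) * ind (x' + y \<in> Z))"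
      by (simp only: sum.swap[where A=Y])
    also have "\<dots> \<le> (\<Sum>x\<in>X. \<Sum>x'\<in>X. \<Sum>c\<in>Z. \<Sum>e\<in>Z. ind (x - x' = c - e))"
      by (intro sum_mono inner_bound fY fZ)
    also have "\<dots> \<le> M" by (rule W_bound[OF fX fZ EX EZ])
    finally show ?thesis .
  qed
  have "(\<Sum>y\<in>Y. u y * u y) / t \<le> M / t" using g2 t by (simp add: divide_right_mono)
  moreover have "t * real (card Y) \<le> t * L" using cY t by simp
  ultimately have "(\<Sum>y\<in>Y. u y * u y) / t + t * real (card Y) \<le> M / t + t * L" by (rule add_mono)
  then have "((\<Sum>y\<in>Y. u y * u y) / t + t * real (card Y)) / 2 \<le> (M / t + t * L) / 2"
    by (rule divide_right_mono) simp
  with g1 show ?thesis by (rule order.trans)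
qed


definition nsq :: "quat \<Rightarrow> real" where
  "nsq q = Re q ^ 2 + Im1 q ^ 2 + Im2 q ^ 2 + Im3 q ^ 2"

lemma nsq_mult: "nsq (z * p) = nsq z * nsq p"
  unfolding nsq_def times_quat_def by (simp add: power2_eq_square algebra_simps)

lemma l4: "(a::real)^2 + b^2 + c^2 + d^2 = 0 \<Longrightarrow> a = 0 \<and> b = 0 \<and> c = 0 \<and> d = 0"
  by (simp add: add_nonneg_eq_0_iff add_nonneg_nonneg)

lemma nsq_pos: "q \<noteq> 0 \<Longrightarrow> nsq q > 0"
proof -
  assume q: "q \<noteq> 0"
  have "nsq q \<ge> 0" unfolding nsq_def by simp
  moreover have "nsq q \<noteq> 0"
  proof
    assume "nsq q = 0"
    then have "Re q = 0 \<and> Im1 q = 0 \<and> Im2 q = 0 \<and> Im3 q = 0" unfolding nsq_def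
      by (rule l4)
    then have "q = 0" by (intro quat_eqI) (simp_all add: zero_quat_def)
    with q show False by simp
  qed
  ultimately show ?thesis by simp
qed

lemma nsq_zero: "nsq 0 = 0" by (simp add: nsq_def zero_quat_def)

lemma quat_no_zero_div: "z * p = 0 \<Longrightarrow> p \<noteq> 0 \<Longrightarrow> z = (0::quat)"
proof (rule ccontr)
  assume "z * p = 0" "p \<noteq> 0" "z \<noteq> 0"
  then have "nsq z * nsq p > 0" using nsq_pos by simp
  moreover have "nsq (z * p) = 0" using \<open>z * p = 0\<close> nsq_zero by simp
  ultimately show False using nsq_mult[of z p] by simp
qed

lemma rmult_inj: "p \<noteq> 0 \<Longrightarrow> x * p = y * p \<Longrightarrow> x = (y::quat)"
  using quat_no_zero_div[of "x - y" p] by (simp add: algebra_simps)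

lemma inj_rmult: "p \<noteq> 0 \<Longrightarrow> inj_on (\<lambda>x::quat. x * p) A"
  by (auto simp: inj_on_def intro: rmult_inj)

lemma energy_rmult:
  assumes "p \<noteq> 0" "finite X"
  shows "additive_energy ((\<lambda>x. x * p) ` X) = additive_energy X"
proof -
  have eq: "ind (a * p - b * p = c * p - d * p) = ind (a - b = c - d)" for a b c d
  proof -
    have "(a * p - b * p = c * p - d * p) \<longleftrightarrow> (a - b) * p = (c - d) * p" by (simp add: algebra_simps)
    also have "\<dots> \<longleftrightarrow> a - b = c - d" using rmult_inj[OF assms(1), of "a - b" "c - d"] by auto
    finally show ?thesis by simp
  qed
  have fX': "finite ((\<lambda>x. x * p) ` X)" using assms by simp
  have "real (additive_energy ((\<lambda>x. x * p) ` X)) = (\<Sum>a\<in>(\<lambda>x. x * p) ` X. \<Sum>b\<in>(\<lambda>x. x * p) ` X. \<Sum>c\<in>(\<lambda>x. x * p) ` X. \<Sum>d\<in>(\<lambda>x. x * p) ` X. ind (a - b = c - d))"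
    by (rule energy_sum[OF fX'])
  also have "\<dots> = (\<Sum>a\<in>X. \<Sum>b\<in>X. \<Sum>c\<in>X. \<Sum>d\<in>X. ind (a * p - b * p = c * p - d * p))"
    by (simp only: sum.reindex[OF inj_rmult[OF assms(1)]] o_def)
  also have "\<dots> = (\<Sum>a\<in>X. \<Sum>b\<in>X. \<Sum>c\<in>X. \<Sum>d\<in>X. ind (a - b = c - d))"
    by (simp only: eq)
  also have "\<dots> = real (additive_energy X)" by (rule energy_sum[OF assms(2), symmetric])
  finally show ?thesis by simp
qed

lemma case_bound:
  fixes p q r lk ll :: quat and A Ak Al :: "quat set" and S :: "(quat \<times> quat) set"
  assumes p: "p \<noteq> 0" and q: "q \<noteq> 0" and r: "r \<noteq> 0"
    and fA: "finite A" and fk: "finite Ak" and fl: "finite Al"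
    and EA: "real (additive_energy A) \<le> M" and Ek: "real (additive_energy Ak) \<le> M"
    and cl: "real (card Al) \<le> L" and t: "t > 0"
    and S: "S \<subseteq> (\<lambda>(c,d). (c + d, c * lk + d * ll)) ` {cd \<in> Ak \<times> Al. fst cd * q + snd cd * r \<in> (\<lambda>a. a * p) ` A}"
  shows "real (card S) \<le> (M / t + t * L) / 2"
proof -
  define T where "T = {cd \<in> Ak \<times> Al. fst cd * q + snd cd * r \<in> (\<lambda>a. a * p) ` A}"
  define X where "X = (\<lambda>x. x * q) ` Ak"
  define Y where "Y = (\<lambda>x. x * r) ` Al"
  define Z where "Z = (\<lambda>x. x * p) ` A"
  have fT: "finite T" unfolding T_def using fk fl by auto
  have "card S \<le> card ((\<lambda>(c,d). (c + d, c * lk + d * ll)) ` T)"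
    using S fT unfolding T_def by (intro card_mono) auto
  also have "\<dots> \<le> card T" by (rule card_image_le[OF fT])
  also have "card T \<le> card {pp \<in> X \<times> Y. fst pp + snd pp \<in> Z}"
  proof (rule card_inj_on_le[where f="\<lambda>(c,d). (c * q, d * r)"])
    show "inj_on (\<lambda>(c,d). (c * q, d * r)) T"
      using rmult_inj[OF q] rmult_inj[OF r] by (auto simp: inj_on_def)
    show "(\<lambda>(c,d). (c * q, d * r)) ` T \<subseteq> {pp \<in> X \<times> Y. fst pp + snd pp \<in> Z}"
      unfolding T_def X_def Y_def Z_def by auto
    show "finite {pp \<in> X \<times> Y. fst pp + snd pp \<in> Z}"
      unfolding X_def Y_def using fk fl by auto
  qed
  finally have "real (card S) \<le> real (card {pp \<in> X \<times> Y. fst pp + snd pp \<in> Z})" by simp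
  also have "\<dots> \<le> (M / t + t * L) / 2"
  proof (rule G_bound)
    show "finite X" "finite Y" "finite Z" unfolding X_def Y_def Z_def using fk fl fA by auto
    show "real (additive_energy X) \<le> M" unfolding X_def using energy_rmult[OF q fk] Ek by simp
    show "real (additive_energy Z) \<le> M" unfolding Z_def using energy_rmult[OF p fA] EA by simp
    show "real (card Y) \<le> L" unfolding Y_def using card_image[OF inj_rmult[OF r]] cl by simp
  qed (rule t)
  finally show ?thesis .
qed


lemma twisted_mem:
  "(x, y) \<in> twisted_sumset X Y l m \<Longrightarrow> \<exists>a\<in>X. \<exists>b\<in>Y. x = a + b \<and> y = a * l + b * m"
  unfolding twisted_sumset_def by auto

lemma key_eq:
  fixes a b c d l1 l2 l3 l4 :: quat
  assumes "a + b = c + d" "a * l1 + b * l2 = c * l3 + d * l4"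
  shows "c * (l3 - l2) + d * (l4 - l2) = a * (l1 - l2)"
proof -
  have "c * (l3 - l2) + d * (l4 - l2) = (c * l3 + d * l4) - (c + d) * l2" by (simp add: algebra_simps)
  also have "\<dots> = (a * l1 + b * l2) - (a + b) * l2" using assms by simp
  also have "\<dots> = a * (l1 - l2)" by (simp add: algebra_simps)
  finally show ?thesis .
qed

lemma final_arith:
  fixes \<tau> K C :: real
  assumes "\<tau> \<ge> 1" "K \<ge> 1" "C \<ge> 1"
  shows "(C * \<tau> ^ 3 / K / (\<tau> / sqrt K) + \<tau> / sqrt K * (C * \<tau>)) / 2 = 1 * C * \<tau> ^ 2 / sqrt K"
proof -
  have sK: "sqrt K > 0" using assms by simp
  have K: "K = sqrt K * sqrt K" using assms by simp
  have t: "\<tau> > 0" using assms by simp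
  have "C * \<tau> ^ 3 / K / (\<tau> / sqrt K) = C * \<tau> ^ 2 / sqrt K"
    apply (subst K) using sK t by (simp add: field_simps power2_eq_square power3_eq_cube)
  moreover have "\<tau> / sqrt K * (C * \<tau>) = C * \<tau> ^ 2 / sqrt K"
    by (simp add: power2_eq_square)
  ultimately show ?thesis by (simp only: mult_1) simp
qed

theorem lemma4p1:
  "\<exists>c::real. c > 0 \<and>
    (\<forall>(\<tau>::real) (K::real) (C::real) (li::quat) (lj::quat) (lk::quat) (ll::quat)
        (Ai::quat set) (Aj::quat set) (Ak::quat set) (Al::quat set).
       \<tau> \<ge> 1 \<and> K \<ge> 1 \<and> C \<ge> 1 \<and>
       li \<noteq> lj \<and> lk \<noteq> ll \<and> {li, lj} \<noteq> {lk, ll} \<and>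
       (\<forall>X \<in> {Ai, Aj, Ak, Al}. finite X \<and> real (card X) \<le> C * \<tau> \<and>
            real (additive_energy X) \<le> C * \<tau> ^ 3 / K)
       \<longrightarrow> real (card (twisted_sumset Ai Aj li lj \<inter> twisted_sumset Ak Al lk ll))
             \<le> c * C * \<tau> ^ 2 / sqrt K)"
proof (intro exI[of _ 1] conjI allI impI)
  show "(0::real) < 1" by simp
  fix \<tau> K C :: real and li lj lk ll :: quat and Ai Aj Ak Al :: "quat set"
  assume H: "\<tau> \<ge> 1 \<and> K \<ge> 1 \<and> C \<ge> 1 \<and>
       li \<noteq> lj \<and> lk \<noteq> ll \<and> {li, lj} \<noteq> {lk, ll} \<and>
       (\<forall>X \<in> {Ai, Aj, Ak, Al}. finite X \<and> real (card X) \<le> C * \<tau> \<and>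
            real (additive_energy X) \<le> C * \<tau> ^ 3 / K)"
  define S where "S = twisted_sumset Ai Aj li lj \<inter> twisted_sumset Ak Al lk ll"
  define M where "M = C * \<tau> ^ 3 / K"
  define L where "L = C * \<tau>"
  define t where "t = \<tau> / sqrt K"
  have tau: "\<tau> \<ge> 1" and KK: "K \<ge> 1" and CC: "C \<ge> 1" using H by auto
  have ij: "li \<noteq> lj" and kl: "lk \<noteq> ll" and ne: "{li, lj} \<noteq> {lk, ll}" using H by auto
  have fi: "finite Ai" and fj: "finite Aj" and fk: "finite Ak" and fl: "finite Al" using H by auto
  have Ei: "real (additive_energy Ai) \<le> M" and Ej: "real (additive_energy Aj) \<le> M"
    and Ek: "real (additive_energy Ak) \<le> M" using H unfolding M_def by auto
  have cl: "real (card Al) \<le> L" using H unfolding L_def by auto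
  have t: "t > 0" unfolding t_def using tau KK by simp
  have mem: "\<exists>a\<in>Ai. \<exists>b\<in>Aj. \<exists>c\<in>Ak. \<exists>d\<in>Al. x = c + d \<and> y = c * lk + d * ll \<and>
               a + b = c + d \<and> a * li + b * lj = c * lk + d * ll" if "(x, y) \<in> S" for x y
  proof -
    from that have "(x, y) \<in> twisted_sumset Ai Aj li lj" "(x, y) \<in> twisted_sumset Ak Al lk ll"
      unfolding S_def by auto
    from twisted_mem[OF this(1)] twisted_mem[OF this(2)] show ?thesis by metis
  qed
  have bound: "real (card S) \<le> (M / t + t * L) / 2"
  proof (cases "lk \<noteq> lj \<and> ll \<noteq> lj")
    case True
    show ?thesis
    proof (rule case_bound[where p="li - lj" and q="lk - lj" and r="ll - lj" and A=Ai and Ak=Ak and Al=Al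
          and lk=lk and ll=ll])
      show "li - lj \<noteq> 0" "lk - lj \<noteq> 0" "ll - lj \<noteq> 0" using ij True by auto
      show "S \<subseteq> (\<lambda>(c,d). (c + d, c * lk + d * ll)) ` {cd \<in> Ak \<times> Al. fst cd * (lk - lj) + snd cd * (ll - lj) \<in> (\<lambda>a. a * (li - lj)) ` Ai}"
      proof
        fix z assume "z \<in> S"
        then obtain x y where z: "z = (x, y)" "(x, y) \<in> S" by (cases z) auto
        from mem[OF z(2)] obtain a b c d where abcd: "a \<in> Ai" "b \<in> Aj" "c \<in> Ak" "d \<in> Al"
          "x = c + d" "y = c * lk + d * ll" "a + b = c + d" "a * li + b * lj = c * lk + d * ll" by blast
        have "c * (lk - lj) + d * (ll - lj) = a * (li - lj)" by (rule key_eq[OF abcd(7,8)])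
        then have "(c, d) \<in> {cd \<in> Ak \<times> Al. fst cd * (lk - lj) + snd cd * (ll - lj) \<in> (\<lambda>a. a * (li - lj)) ` Ai}"
          using abcd by auto
        then show "z \<in> (\<lambda>(c,d). (c + d, c * lk + d * ll)) ` {cd \<in> Ak \<times> Al. fst cd * (lk - lj) + snd cd * (ll - lj) \<in> (\<lambda>a. a * (li - lj)) ` Ai}"
          using z abcd by (intro image_eqI[of _ _ "(c, d)"]) auto
      qed
    qed (use fi fk fl Ei Ek cl t in auto)
  next
    case False
    have q: "lk - li \<noteq> 0" and r: "ll - li \<noteq> 0"
    proof -
      show "lk - li \<noteq> 0"
      proof
        assume "lk - li = 0"
        then have "lk = li" by simp
        with False kl ij have "ll = lj" by auto
        with \<open>lk = li\<close> ne show False by auto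
      qed
      show "ll - li \<noteq> 0"
      proof
        assume "ll - li = 0"
        then have "ll = li" by simp
        with False kl ij have "lk = lj" by auto
        with \<open>ll = li\<close> ne show False by auto
      qed
    qed
    show ?thesis
    proof (rule case_bound[where p="lj - li" and q="lk - li" and r="ll - li" and A=Aj and Ak=Ak and Al=Al
          and lk=lk and ll=ll])
      show "lj - li \<noteq> 0" using ij by auto
      show "lk - li \<noteq> 0" "ll - li \<noteq> 0" by (rule q, rule r)
      show "S \<subseteq> (\<lambda>(c,d). (c + d, c * lk + d * ll)) ` {cd \<in> Ak \<times> Al. fst cd * (lk - li) + snd cd * (ll - li) \<in> (\<lambda>a. a * (lj - li)) ` Aj}"
      proof
        fix z assume "z \<in> S"
        then obtain x y where z: "z = (x, y)" "(x, y) \<in> S" by (cases z) auto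
        from mem[OF z(2)] obtain a b c d where abcd: "a \<in> Ai" "b \<in> Aj" "c \<in> Ak" "d \<in> Al"
          "x = c + d" "y = c * lk + d * ll" "a + b = c + d" "a * li + b * lj = c * lk + d * ll" by blast
        have e1: "b + a = c + d" using abcd(7) by (simp add: add.commute)
        have e2: "b * lj + a * li = c * lk + d * ll" using abcd(8) by (simp add: add.commute)
        have "c * (lk - li) + d * (ll - li) = b * (lj - li)" by (rule key_eq[OF e1 e2])
        then have "(c, d) \<in> {cd \<in> Ak \<times> Al. fst cd * (lk - li) + snd cd * (ll - li) \<in> (\<lambda>a. a * (lj - li)) ` Aj}"
          using abcd by auto
        then show "z \<in> (\<lambda>(c,d). (c + d, c * lk + d * ll)) ` {cd \<in> Ak \<times> Al. fst cd * (lk - li) + snd cd * (ll - li) \<in> (\<lambda>a. a * (lj - li)) ` Aj}"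
          using z abcd by (intro image_eqI[of _ _ "(c, d)"]) auto
      qed
    qed (use fj fk fl Ej Ek cl t in auto)
  qed
  have "(M / t + t * L) / 2 = 1 * C * \<tau> ^ 2 / sqrt K"
    unfolding M_def t_def L_def by (rule final_arith[OF tau KK CC])
  with bound show "real (card (twisted_sumset Ai Aj li lj \<inter> twisted_sumset Ak Al lk ll)) \<le> 1 * C * \<tau> ^ 2 / sqrt K"
    unfolding S_def by simp
qed

end
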